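(* Let $c\in\mathbb{R}$, $\beta\geq 0$ and $q\in(0,1)$. Then $$Z_{\beta,q,c}=\sum_{\sigma\in\mathcal{B}} e^{-\beta H(\sigma)}q^{f_c(\sigma)}=e^{-\beta}\prod_{i=1}^\infty\big(1+(e^{-2\beta}-1)q^{2i}\big)\big(1+q^{2(i-c)}\big)\big(1+q^{2(i-1+c)}\big).$$
   Context: Spin configurations are $\sigma=(\sigma_i)_{i\in\mathbb{Z}}\in\{-1,+1\}^{\mathbb{Z}}$. The set of blocking configurations is $\mathcal{B}=\{\sigma\in\{-1,+1\}^{\mathbb{Z}}: \exists a,b\in\mathbb{Z}\text{ such that } \sigma_{a-i}=-1,\ \sigma_{b+i}=+1\ \forall i\in\mathbb{N}\}$. The homogeneous Hamiltonian is $H(\sigma)=\sum_{i\in\mathbb{Z}}\mathbb{1}_{\{\sigma_i\neq\sigma_{i+1}\}}$ (the Ising Hamiltonian with interaction $J(i)\equiv 1$), and $f_c(\sigma)=2\sum_{i=1}^\infty(i-c)\mathbb{1}_{\{\sigma_i=-1\}}-2\sum_{i=-\infty}^0(i-c)\mathbb{1}_{\{\sigma_i=1\}}$. $Z_{\beta,q,c}$ is the normalising constant (partition function) of the Ising measure $\mu(\sigma)\propto e^{-\beta H(\sigma)}q^{f_c(\sigma)}$; configurations outside $\mathcal{B}$ contribute zero weight. *)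

theory Defs
  imports "HOL-Analysis.Analysis"
begin

type_synonym config = "int \<Rightarrow> int"

definition spin_configs :: "config set" where
  "spin_configs = {\<sigma>. \<forall>i. \<sigma> i \<in> {-1, 1}}"

definition blocking :: "config set" where
  "blocking = {\<sigma> \<in> spin_configs. \<exists>a b::int. \<forall>i::nat.
      \<sigma> (a - int i) = -1 \<and> \<sigma> (b + int i) = 1}"

definition Ham :: "config \<Rightarrow> real" where
  "Ham \<sigma> = (\<Sum>\<^sub>\<infinity> i::int. if \<sigma> i \<noteq> \<sigma> (i + 1) then 1 else 0)"

definition f_c :: "real \<Rightarrow> config \<Rightarrow> real" where
  "f_c c \<sigma> =
     2 * (\<Sum>\<^sub>\<infinity> i\<in>{1::int..}. if \<sigma> i = -1 then real_of_int i - c else 0)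
   - 2 * (\<Sum>\<^sub>\<infinity> i\<in>{..0::int}. if \<sigma> i = 1 then real_of_int i - c else 0)"

definition weight :: "real \<Rightarrow> real \<Rightarrow> real \<Rightarrow> config \<Rightarrow> real" where
  "weight \<beta> q c \<sigma> = exp (- \<beta> * Ham \<sigma>) * q powr f_c c \<sigma>"

definition partition_fn :: "real \<Rightarrow> real \<Rightarrow> real \<Rightarrow> real" where
  "partition_fn \<beta> q c = (\<Sum>\<^sub>\<infinity> \<sigma>\<in>blocking. weight \<beta> q c \<sigma>)"

end

theory Submission
  imports Defs
begin

fun cfg :: "int \<Rightarrow> (nat \<times> nat) list \<Rightarrow> int \<Rightarrow> int" where
  "cfg d [] x = (if x \<le> d then -1 else 1)"
| "cfg d ((a,b)#L) x = (if x \<le> d then -1 else if x \<le> d + int a then 1 else cfg (d + int a + int b) L x)"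

definition Lpos :: "(nat \<times> nat) list set" where
  "Lpos = {L. \<forall>(a,b)\<in>set L. 0 < a \<and> 0 < b}"

fun tot :: "(nat \<times> nat) list \<Rightarrow> nat" where
  "tot [] = 0" | "tot ((a,b)#L) = a + b + tot L"

fun sbb :: "(nat \<times> nat) list \<Rightarrow> nat" where
  "sbb [] = 0" | "sbb ((a,b)#L) = b + sbb L"

fun invL :: "(nat \<times> nat) list \<Rightarrow> nat" where
  "invL [] = 0" | "invL ((a,b)#L) = a * (b + sbb L) + invL L"

lemma Lpos_Cons[simp]: "((a,b)#L) \<in> Lpos \<longleftrightarrow> 0 < a \<and> 0 < b \<and> L \<in> Lpos"
  by (auto simp: Lpos_def)

lemma Lpos_Nil[simp]: "[] \<in> Lpos"
  by (auto simp: Lpos_def)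

lemma cfg_low: "x \<le> d \<Longrightarrow> cfg d L x = -1"
  by (induction L arbitrary: d) auto

lemma cfg_high: "x > d + int (tot L) \<Longrightarrow> cfg d L x = 1"
  by (induction d L x rule: cfg.induct) auto

lemma cfg_vals: "cfg d L x \<in> {-1, 1}"
  by (induction d L x rule: cfg.induct) auto

lemma cfg_first: "L \<in> Lpos \<Longrightarrow> cfg d L (d+1) = 1"
  by (cases L) auto

lemma cfg_blocking: "cfg d L \<in> blocking"
  unfolding blocking_def spin_configs_def
proof (intro CollectI conjI allI)
  show "cfg d L i \<in> {-1, 1}" for i by (rule cfg_vals)
  show "\<exists>a b. \<forall>i::nat. cfg d L (a - int i) = -1 \<and> cfg d L (b + int i) = 1"
    by (rule exI[of _ d], rule exI[of _ "d + int (tot L) + 1"]) (auto intro!: cfg_low cfg_high)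
qed

lemma cfg_d_unique:
  assumes "L \<in> Lpos" "L' \<in> Lpos" "cfg d L = cfg d' L'"
  shows "d = d'"
proof (rule ccontr)
  assume "d \<noteq> d'"
  then consider "d < d'" | "d' < d" by linarith
  then show False
  proof cases
    case 1
    have "cfg d L (d+1) = 1" using assms cfg_first by blast
    moreover have "cfg d' L' (d+1) = -1" using 1 by (intro cfg_low) simp
    ultimately show False using assms(3) by simp
  next
    case 2
    have "cfg d' L' (d'+1) = 1" using assms cfg_first by blast
    moreover have "cfg d L (d'+1) = -1" using 2 by (intro cfg_low) simp
    ultimately show False using assms(3) by simp
  qed
qed

lemma cfg_inj:
  assumes "L \<in> Lpos" "L' \<in> Lpos" "cfg d L = cfg d' L'"
  shows "d = d' \<and> L = L'"
  using assms
proof (induction L arbitrary: d d' L')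
  case Nil
  then have dd: "d = d'" using cfg_d_unique by blast
  show ?case
  proof (cases L')
    case Nil then show ?thesis using dd by simp
  next
    case (Cons p L'')
    obtain a b where p: "p = (a,b)" by fastforce
    have "cfg d' L' (d' + int a + 1) = -1" using Cons p Nil.prems by (auto intro!: cfg_low)
    moreover have "cfg d [] (d' + int a + 1) = 1" using dd by simp
    ultimately show ?thesis using Nil.prems by simp
  qed
next
  case (Cons p L)
  obtain a b where p: "p = (a,b)" by fastforce
  have dd: "d = d'" using cfg_d_unique Cons.prems by blast
  show ?case
  proof (cases L')
    case Nil
    have "cfg d (p#L) (d + int a + 1) = -1" using Cons p by (auto intro!: cfg_low)
    moreover have "cfg d' [] (d + int a + 1) = 1" using dd Cons.prems p by simp
    ultimately show ?thesis using Cons.prems Nil by simp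
  next
    case (Cons p' L'')
    obtain a' b' where p': "p' = (a',b')" by fastforce
    have ab: "0 < a" "0 < b" "L \<in> Lpos" using Cons.prems p by auto
    have ab': "0 < a'" "0 < b'" "L'' \<in> Lpos" using Cons.prems Cons p' by auto
    have aa: "a = a'"
    proof (rule ccontr)
      assume "a \<noteq> a'"
      then consider "a < a'" | "a' < a" by linarith
      then show False
      proof cases
        case 1
        have "cfg d (p#L) (d + int a + 1) = -1" using ab p 1 by (auto intro!: cfg_low)
        moreover have "cfg d' L' (d + int a + 1) = 1" using dd Cons p' 1 by simp
        ultimately show False using Cons.prems by simp
      next
        case 2
        have "cfg d' L' (d + int a' + 1) = -1" using ab' p' Cons dd 2 by (auto intro!: cfg_low)
        moreover have "cfg d (p#L) (d + int a' + 1) = 1" using p 2 by simp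
        ultimately show False using Cons.prems by simp
      qed
    qed
    have eqf: "cfg (d + int a + int b) L = cfg (d + int a + int b') L''"
    proof
      fix x
      show "cfg (d + int a + int b) L x = cfg (d + int a + int b') L'' x"
      proof (cases "x \<le> d + int a")
        case True
        then show ?thesis using ab ab' by (simp add: cfg_low)
      next
        case False
        have "cfg d (p#L) x = cfg d' L' x" using Cons.prems by simp
        then show ?thesis using False p p' Cons dd aa by simp
      qed
    qed
    from Cons.IH[OF ab(3) ab'(3) eqf] have "b = b'" "L = L''" by auto
    then show ?thesis using dd aa p p' Cons by simp
  qed
qed

lemma int_least:
  fixes P :: "int \<Rightarrow> bool"
  assumes "P b" "\<And>x. P x \<Longrightarrow> a \<le> x"
  shows "\<exists>x. P x \<and> (\<forall>y. P y \<longrightarrow> x \<le> y)"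
proof -
  let ?n = "LEAST n::nat. P (a + int n)"
  have ab: "a \<le> b" using assms by blast
  have "P (a + int (nat (b - a)))" using assms ab by simp
  hence P: "P (a + int ?n)" by (rule LeastI)
  have "a + int ?n \<le> y" if "P y" for y
  proof -
    have "a \<le> y" using assms that by blast
    hence "P (a + int (nat (y - a)))" using that by simp
    hence "?n \<le> nat (y - a)" by (rule Least_le)
    thus ?thesis using \<open>a \<le> y\<close> by linarith
  qed
  thus ?thesis using P by blast
qed

lemma spin_vals: "\<sigma> \<in> spin_configs \<Longrightarrow> \<sigma> x \<noteq> 1 \<Longrightarrow> \<sigma> x = -1"
  by (auto simp: spin_configs_def)

lemma cfg_surj_aux:
  "\<forall>\<sigma>. \<sigma> \<in> spin_configs \<longrightarrow> (\<forall>x\<le>a0. \<sigma> x = -1) \<longrightarrow> (\<forall>x\<ge>b0. \<sigma> x = 1)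
     \<longrightarrow> card {x\<in>{a0..b0}. \<sigma> x = 1} = m \<longrightarrow> (\<exists>d L. L\<in>Lpos \<and> \<sigma> = cfg d L)"
proof (induction m rule: less_induct)
  case (less m)
  show ?case
  proof (intro allI impI)
    fix \<sigma> :: "int \<Rightarrow> int"
    assume sp: "\<sigma> \<in> spin_configs" and A: "\<forall>x\<le>a0. \<sigma> x = -1" and B: "\<forall>x\<ge>b0. \<sigma> x = 1"
      and m: "card {x\<in>{a0..b0}. \<sigma> x = 1} = m"
    have "\<exists>x. \<sigma> (x+1) = 1 \<and> (\<forall>y. \<sigma> (y+1) = 1 \<longrightarrow> x \<le> y)"
    proof (rule int_least[where b=b0 and a=a0])
      show "\<sigma> (b0+1) = 1" using B by simp
      show "a0 \<le> x" if "\<sigma> (x+1) = 1" for x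
        using A that by (metis add.commute add_le_cancel_left add_mono_thms_linordered_field(3)
            int_one_le_iff_zero_less less_add_one linorder_not_less one_neq_neg_one zle_add1_eq_le)
    qed
    then obtain d where d1: "\<sigma> (d+1) = 1" and dmin: "\<And>y. \<sigma> (y+1) = 1 \<Longrightarrow> d \<le> y" by blast
    have low: "\<sigma> y = -1" if "y \<le> d" for y
    proof (rule spin_vals[OF sp], rule notI)
      assume "\<sigma> y = 1"
      hence "d \<le> y - 1" using dmin[of "y-1"] by simp
      thus False using that by simp
    qed
    have dA: "a0 < d + 1" using A d1 by (metis linorder_not_less one_neq_neg_one)
    have dB: "d + 1 \<le> b0" using dmin[of "b0 - 1"] B by simp
    show "\<exists>d L. L\<in>Lpos \<and> \<sigma> = cfg d L"
    proof (cases "\<forall>x>d. \<sigma> x = 1")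
      case True
      have "\<sigma> = cfg d []"
      proof
        fix x show "\<sigma> x = cfg d [] x" using True low by (cases "x \<le> d") auto
      qed
      then show ?thesis using Lpos_Nil by blast
    next
      case False
      have "\<exists>x. (x > d \<and> \<sigma> x = -1) \<and> (\<forall>y. (y > d \<and> \<sigma> y = -1) \<longrightarrow> x \<le> y)"
      proof -
        obtain x0 where "x0 > d" "\<sigma> x0 \<noteq> 1" using False by blast
        hence "x0 > d \<and> \<sigma> x0 = -1" using spin_vals[OF sp] by blast
        thus ?thesis by (intro int_least[where a=d]) auto
      qed
      then obtain e where e1: "e > d" "\<sigma> e = -1" and emin: "\<And>y. y > d \<Longrightarrow> \<sigma> y = -1 \<Longrightarrow> e \<le> y"
        by blast
      have mid1: "\<sigma> x = 1" if "d < x" "x < e" for x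
        using emin[of x] that spin_vals[OF sp, of x] by force
      have ed: "e > d + 1" using e1 d1 by (metis one_neq_neg_one zless_imp_add1_zle order_le_less)
      have eb: "e < b0" using B e1 by (metis linorder_not_less one_neq_neg_one)
      have "\<exists>x. (x > e \<and> \<sigma> x = 1) \<and> (\<forall>y. (y > e \<and> \<sigma> y = 1) \<longrightarrow> x \<le> y)"
        by (rule int_least[where b=b0 and a=e]) (use B eb in auto)
      then obtain g where g1: "g > e" "\<sigma> g = 1" and gmin: "\<And>y. y > e \<Longrightarrow> \<sigma> y = 1 \<Longrightarrow> g \<le> y"
        by blast
      have gb: "g \<le> b0" using gmin[of b0] B eb by simp
      have mid2: "\<sigma> x = -1" if "e < x" "x < g" for x
        using gmin[of x] that spin_vals[OF sp, of x] by force
      define \<sigma>' where "\<sigma>' = (\<lambda>x. if x \<le> g - 1 then -1 else \<sigma> x)"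
      have sp': "\<sigma>' \<in> spin_configs" using sp by (auto simp: spin_configs_def \<sigma>'_def)
      have A': "\<forall>x\<le>a0. \<sigma>' x = -1" using A by (auto simp: \<sigma>'_def)
      have B': "\<forall>x\<ge>b0. \<sigma>' x = 1" using B gb by (auto simp: \<sigma>'_def)
      have sub: "{x\<in>{a0..b0}. \<sigma>' x = 1} \<subset> {x\<in>{a0..b0}. \<sigma> x = 1}"
      proof
        show "{x\<in>{a0..b0}. \<sigma>' x = 1} \<subseteq> {x\<in>{a0..b0}. \<sigma> x = 1}"
          by (auto simp: \<sigma>'_def split: if_splits)
        have "d + 1 \<in> {x\<in>{a0..b0}. \<sigma> x = 1}" using dA dB d1 by auto
        moreover have "d + 1 \<notin> {x\<in>{a0..b0}. \<sigma>' x = 1}" using ed g1 by (auto simp: \<sigma>'_def)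
        ultimately show "{x\<in>{a0..b0}. \<sigma>' x = 1} \<noteq> {x\<in>{a0..b0}. \<sigma> x = 1}" by blast
      qed
      have "card {x\<in>{a0..b0}. \<sigma>' x = 1} < m"
      proof -
        have "finite {x\<in>{a0..b0}. \<sigma> x = 1}" by (rule finite_subset[of _ "{a0..b0}"]) auto
        from psubset_card_mono[OF this sub] m show ?thesis by simp
      qed
      with less.IH sp' A' B' obtain d' L' where L': "L' \<in> Lpos" and s': "\<sigma>' = cfg d' L'"
        by blast
      have dg: "d' = g - 1"
      proof (rule ccontr)
        assume "d' \<noteq> g - 1"
        then consider "d' < g - 1" | "d' > g - 1" by linarith
        then show False
        proof cases
          case 1
          have "cfg d' L' (d'+1) = 1" using cfg_first L' by blast
          moreover have "\<sigma>' (d'+1) = -1" using 1 by (simp add: \<sigma>'_def)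
          ultimately show False using s' by simp
        next
          case 2
          have "cfg d' L' g = -1" using 2 by (intro cfg_low) simp
          moreover have "\<sigma>' g = 1" using g1 by (simp add: \<sigma>'_def)
          ultimately show False using s' by simp
        qed
      qed
      define a where "a = nat (e - 1 - d)"
      define b where "b = nat (g - e)"
      have ab: "0 < a" "0 < b" using ed g1 by (auto simp: a_def b_def)
      have ia: "d + int a = e - 1" using ed by (simp add: a_def)
      have ib: "d + int a + int b = g - 1" using ed g1 by (simp add: a_def b_def)
      have "\<sigma> = cfg d ((a,b)#L')"
      proof
        fix x
        show "\<sigma> x = cfg d ((a,b)#L') x"
        proof (cases "x \<le> d")
          case True then show ?thesis using low by simp
        next
          case F1: False
          show ?thesis
          proof (cases "x \<le> e - 1")
            case True then show ?thesis using F1 mid1[of x] ia by simp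
          next
            case F2: False
            have "cfg d ((a,b)#L') x = cfg (d + int a + int b) L' x" using F1 F2 ia by simp
            also have "\<dots> = cfg (g - 1) L' x" using ib by simp
            also have "\<dots> = \<sigma>' x" using s' dg by simp
            also have "\<dots> = \<sigma> x"
            proof (cases "x \<le> g - 1")
              case True
              hence "x = e \<or> (e < x \<and> x < g)" using F2 by linarith
              then show ?thesis using True mid2 e1 by (auto simp: \<sigma>'_def)
            qed (simp add: \<sigma>'_def)
            finally show ?thesis by simp
          qed
        qed
      qed
      moreover have "(a,b)#L' \<in> Lpos" using ab L' by simp
      ultimately show ?thesis by blast
    qed
  qed
qed

lemma cfg_surj:
  assumes "\<sigma> \<in> blocking"
  shows "\<exists>d L. L\<in>Lpos \<and> \<sigma> = cfg d L"
proof -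
  from assms obtain a0 b0 where sp: "\<sigma> \<in> spin_configs" and ab: "\<forall>i::nat. \<sigma> (a0 - int i) = -1 \<and> \<sigma> (b0 + int i) = 1"
    by (auto simp: blocking_def)
  have A: "\<forall>x\<le>a0. \<sigma> x = -1"
  proof (intro allI impI)
    fix x assume "x \<le> a0" then show "\<sigma> x = -1" using ab[rule_format, of "nat (a0 - x)"] by simp
  qed
  have B: "\<forall>x\<ge>b0. \<sigma> x = 1"
  proof (intro allI impI)
    fix x assume "x \<ge> b0" then show "\<sigma> x = 1" using ab[rule_format, of "nat (x - b0)"] by simp
  qed
  show ?thesis using cfg_surj_aux sp A B by blast
qed

lemma cfg_image: "(\<lambda>(d,L). cfg d L) ` (UNIV \<times> Lpos) = blocking"
  using cfg_surj cfg_blocking by fastforce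

lemma cfg_inj_on: "inj_on (\<lambda>(d,L). cfg d L) (UNIV \<times> Lpos)"
  using cfg_inj by (auto simp: inj_on_def)

definition W :: "config \<Rightarrow> int set" where "W \<sigma> = {x. \<sigma> x \<noteq> \<sigma> (x+1)}"

lemma Ham_card: "finite (W \<sigma>) \<Longrightarrow> Ham \<sigma> = real (card (W \<sigma>))"
proof -
  assume fin: "finite (W \<sigma>)"
  have "Ham \<sigma> = (\<Sum>\<^sub>\<infinity>i\<in>W \<sigma>. 1)" unfolding Ham_def
    by (rule infsum_cong_neutral) (auto simp: W_def)
  also have "\<dots> = real (card (W \<sigma>))" using fin by simp
  finally show ?thesis .
qed

lemma W_cfg_ge: "x \<in> W (cfg d L) \<Longrightarrow> d \<le> x"
  by (rule ccontr) (auto simp: W_def cfg_low)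

lemma W_cfg: "L \<in> Lpos \<Longrightarrow> finite (W (cfg d L)) \<and> card (W (cfg d L)) = 1 + 2 * length L"
proof (induction L arbitrary: d)
  case Nil
  have "W (cfg d []) = {d}" by (auto simp: W_def)
  then show ?case by (simp del: cfg.simps)
next
  case (Cons p L)
  obtain a b where p: "p = (a,b)" by fastforce
  have ab: "0 < a" "0 < b" "L \<in> Lpos" using Cons.prems p by auto
  let ?d' = "d + int a + int b"
  have eq: "W (cfg d (p#L)) = insert d (insert (d + int a) (W (cfg ?d' L)))"
  proof (rule set_eqI)
    fix x
    consider "x < d" | "x = d" | "d < x \<and> x < d + int a" | "x = d + int a" | "x > d + int a" by linarith
    then show "x \<in> W (cfg d (p#L)) \<longleftrightarrow> x \<in> insert d (insert (d + int a) (W (cfg ?d' L)))"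
    proof cases
      case 1 then show ?thesis using ab p W_cfg_ge[of x ?d' L] by (auto simp: W_def)
    next
      case 2 then show ?thesis using ab p by (auto simp: W_def)
    next
      case 3 then show ?thesis using ab p W_cfg_ge[of x ?d' L] by (auto simp: W_def)
    next
      case 4 then show ?thesis using ab p by (auto simp: W_def cfg_low)
    next
      case 5 then show ?thesis using ab p by (auto simp: W_def)
    qed
  qed
  have n1: "d \<notin> W (cfg ?d' L)" using W_cfg_ge[of d ?d' L] ab by auto
  have n2: "d + int a \<notin> W (cfg ?d' L)" using W_cfg_ge[of "d + int a" ?d' L] ab by auto
  have IH: "finite (W (cfg ?d' L))" "card (W (cfg ?d' L)) = 1 + 2 * length L"
    using Cons.IH[OF ab(3)] by auto
  show ?case using eq n1 n2 IH ab by simp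
qed

lemma Ham_cfg: "L \<in> Lpos \<Longrightarrow> Ham (cfg d L) = 1 + 2 * real (length L)"
  using W_cfg[of L d] Ham_card by simp

definition Fv :: "real \<Rightarrow> config \<Rightarrow> int \<Rightarrow> real" where
  "Fv c \<sigma> x = ((if \<sigma> x = -1 then 1 else 0) - (if x \<le> 0 then 1 else 0)) * (real_of_int x - c)"

lemma FL:
  assumes sp: "\<sigma> \<in> spin_configs" and A: "\<forall>x\<le>-N. \<sigma> x = -1" and B: "\<forall>x>N. \<sigma> x = 1"
  shows "f_c c \<sigma> = 2 * (\<Sum>x\<in>{-N..N}. Fv c \<sigma> x)"
proof -
  have s1: "(\<Sum>\<^sub>\<infinity> i\<in>{1::int..}. if \<sigma> i = -1 then real_of_int i - c else 0)
      = (\<Sum>i\<in>{1..N}. if \<sigma> i = -1 then real_of_int i - c else 0)"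
  proof -
    have "(\<Sum>\<^sub>\<infinity> i\<in>{1::int..}. if \<sigma> i = -1 then real_of_int i - c else 0)
      = (\<Sum>\<^sub>\<infinity> i\<in>{1..N}. if \<sigma> i = -1 then real_of_int i - c else 0)"
      by (rule infsum_cong_neutral) (use B in auto)
    then show ?thesis by simp
  qed
  have s2: "(\<Sum>\<^sub>\<infinity> i\<in>{..0::int}. if \<sigma> i = 1 then real_of_int i - c else 0)
      = (\<Sum>i\<in>{-N..0}. if \<sigma> i = 1 then real_of_int i - c else 0)"
  proof -
    have "(\<Sum>\<^sub>\<infinity> i\<in>{..0::int}. if \<sigma> i = 1 then real_of_int i - c else 0)
      = (\<Sum>\<^sub>\<infinity> i\<in>{-N..0}. if \<sigma> i = 1 then real_of_int i - c else 0)"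
      by (rule infsum_cong_neutral) (use A in auto)
    then show ?thesis by simp
  qed
  have vals: "\<sigma> x = -1 \<or> \<sigma> x = 1" for x using sp by (auto simp: spin_configs_def)
  have "(\<Sum>x\<in>{-N..N}. Fv c \<sigma> x) = (\<Sum>x\<in>{-N..0}. Fv c \<sigma> x) + (\<Sum>x\<in>{1..N}. Fv c \<sigma> x)"
  proof (cases "N \<ge> 0")
    case True
    have "{-N..N} = {-N..0} \<union> {1..N}" using True by auto
    then show ?thesis by (simp add: sum.union_disjoint)
  next
    case False
    then show ?thesis by simp
  qed
  also have "(\<Sum>x\<in>{-N..0}. Fv c \<sigma> x) = - (\<Sum>i\<in>{-N..0}. if \<sigma> i = 1 then real_of_int i - c else 0)"
    by (simp add: sum_negf[symmetric]) (rule sum.cong, auto simp: Fv_def, use vals in force)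
  also have "(\<Sum>x\<in>{1..N}. Fv c \<sigma> x) = (\<Sum>i\<in>{1..N}. if \<sigma> i = -1 then real_of_int i - c else 0)"
    by (rule sum.cong) (auto simp: Fv_def)
  finally show ?thesis unfolding f_c_def s1 s2 by simp
qed

lemma flip_lemma:
  assumes sp1: "\<sigma>1 \<in> spin_configs" and A1: "\<forall>x\<le>-N. \<sigma>1 x = -1" and B1: "\<forall>x>N. \<sigma>1 x = 1"
  assumes sp2: "\<sigma>2 \<in> spin_configs" and A2: "\<forall>x\<le>-N. \<sigma>2 x = -1" and B2: "\<forall>x>N. \<sigma>2 x = 1"
  assumes K: "K \<subseteq> {-N..N}" and out: "\<And>x. x \<notin> K \<Longrightarrow> \<sigma>1 x = \<sigma>2 x"
    and inK: "\<And>x. x \<in> K \<Longrightarrow> \<sigma>1 x = 1 \<and> \<sigma>2 x = -1"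
  shows "f_c c \<sigma>1 = f_c c \<sigma>2 - 2 * (\<Sum>x\<in>K. real_of_int x - c)"
proof -
  have "(\<Sum>x\<in>{-N..N}. Fv c \<sigma>1 x) - (\<Sum>x\<in>{-N..N}. Fv c \<sigma>2 x)
      = (\<Sum>x\<in>{-N..N}. Fv c \<sigma>1 x - Fv c \<sigma>2 x)" by (simp add: sum_subtractf)
  also have "\<dots> = (\<Sum>x\<in>{-N..N}. if x \<in> K then -(real_of_int x - c) else 0)"
    by (rule sum.cong) (auto simp: Fv_def out dest: inK)
  also have "\<dots> = - (\<Sum>x\<in>K. real_of_int x - c)"
    using K by (simp add: sum.If_cases Int_absorb1 sum_subtractf)
  finally show ?thesis using FL[OF sp1 A1 B1, of c] FL[OF sp2 A2 B2, of c] by simp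
qed

lemma cfg_bounds:
  assumes "\<bar>d\<bar> + int (tot L) \<le> N"
  shows "\<forall>x\<le>-N. cfg d L x = -1" "\<forall>x>N. cfg d L x = 1"
  using assms by (auto intro!: cfg_low cfg_high)

lemma cfg_spin: "cfg d L \<in> spin_configs"
  unfolding spin_configs_def using cfg_vals by blast

definition psi :: "real \<Rightarrow> int \<Rightarrow> real" where
  "psi c m = real_of_int m * (real_of_int m + 1) / 2 - c * real_of_int m"

lemma sum_block: "(\<Sum>x\<in>{d+1..d + int a}. real_of_int x - c) = real a * real_of_int d + real a * (real a + 1) / 2 - real a * c"
proof (induction a)
  case 0 then show ?case by simp
next
  case (Suc a)
  have "{d+1..d + int (Suc a)} = insert (d + int a + 1) {d+1..d + int a}" by auto
  then have "(\<Sum>x\<in>{d+1..d + int (Suc a)}. real_of_int x - c)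
      = (real_of_int (d + int a + 1) - c) + (\<Sum>x\<in>{d+1..d + int a}. real_of_int x - c)"
    by simp
  then show ?case using Suc by (simp add: algebra_simps add_divide_distrib)
qed

lemma f_cfg_nil: "f_c c (cfg d []) = 2 * psi c d"
proof (induction d rule: int_induct[where k=0])
  case base
  have "f_c c (cfg 0 []) = 2 * (\<Sum>x\<in>{-1..1}. Fv c (cfg 0 []) x)"
    by (rule FL[OF cfg_spin]) auto
  also have "(\<Sum>x\<in>{-1..1}. Fv c (cfg 0 []) x) = 0"
    by (rule sum.neutral) (auto simp: Fv_def)
  finally show ?case by (simp add: psi_def)
next
  case (step1 i)
  have "f_c c (cfg i []) = f_c c (cfg (i+1) []) - 2 * (\<Sum>x\<in>{i+1}. real_of_int x - c)"
    by (rule flip_lemma[where N="\<bar>i\<bar> + 2"]) (auto simp: cfg_spin)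
  then show ?case using step1 by (simp add: psi_def algebra_simps add_divide_distrib del: cfg.simps)
next
  case (step2 i)
  have "f_c c (cfg (i-1) []) = f_c c (cfg i []) - 2 * (\<Sum>x\<in>{i}. real_of_int x - c)"
    by (rule flip_lemma[where N="\<bar>i\<bar> + 2"]) (auto simp: cfg_spin)
  then show ?case using step2 by (simp add: psi_def algebra_simps add_divide_distrib diff_divide_distrib del: cfg.simps)
qed

lemma f_cfg: "L \<in> Lpos \<Longrightarrow> f_c c (cfg d L) = 2 * (psi c (d + int (sbb L)) + real (invL L))"
proof (induction L arbitrary: d)
  case Nil then show ?case by (simp add: f_cfg_nil del: cfg.simps)
next
  case (Cons p L)
  obtain a b where p: "p = (a,b)" by fastforce
  have ab: "0 < a" "0 < b" "L \<in> Lpos" using Cons.prems p by auto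
  let ?d' = "d + int a + int b"
  let ?N = "\<bar>d\<bar> + int a + int b + int (tot L)"
  have "f_c c (cfg d (p#L)) = f_c c (cfg ?d' L) - 2 * (\<Sum>x\<in>{d+1..d + int a}. real_of_int x - c)"
  proof (rule flip_lemma[where N="?N"])
    show "\<forall>x\<le>-?N. cfg d (p#L) x = -1" "\<forall>x>?N. cfg d (p#L) x = 1"
      by (rule cfg_bounds; simp add: p)+
    show "\<forall>x\<le>-?N. cfg ?d' L x = -1" "\<forall>x>?N. cfg ?d' L x = 1"
      by (rule cfg_bounds; simp)+
    show "{d+1..d + int a} \<subseteq> {-?N..?N}" by auto
    show "cfg d (p#L) x = cfg ?d' L x" if "x \<notin> {d+1..d + int a}" for x
      using that p by (auto simp: cfg_low)
    show "cfg d (p#L) x = 1 \<and> cfg ?d' L x = -1" if "x \<in> {d+1..d + int a}" for x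
      using that p by (auto simp: cfg_low)
  qed (auto simp: cfg_spin)
  also have "f_c c (cfg ?d' L) = 2 * (psi c (?d' + int (sbb L)) + real (invL L))"
    using Cons.IH[OF ab(3)] .
  finally show ?case using p sum_block[where d=d and a=a and c=c] by (simp add: psi_def algebra_simps add_divide_distrib del: cfg.simps)
qed

lemma finite_in_chain:
  fixes A :: "nat \<Rightarrow> 'a set"
  assumes inc: "incseq A" and F: "finite F" "F \<subseteq> (\<Union>n. A n)"
  shows "\<exists>n. F \<subseteq> A n"
  using F
proof (induction F rule: finite_induct)
  case empty then show ?case by simp
next
  case (insert x F)
  then obtain n where n: "F \<subseteq> A n" by auto
  from insert obtain m where m: "x \<in> A m" by auto
  have "A n \<subseteq> A (max n m)" "A m \<subseteq> A (max n m)" using inc by (auto simp: incseq_def)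
  then show ?case using n m by blast
qed

lemma has_sum_mono_union:
  fixes f :: "'a \<Rightarrow> real" and A :: "nat \<Rightarrow> 'a set"
  assumes nonneg: "\<And>x. x \<in> U \<Longrightarrow> 0 \<le> f x"
  assumes mono: "\<And>n. A n \<subseteq> A (Suc n)"
  assumes U: "U = (\<Union>n. A n)"
  assumes hs: "\<And>n. (f has_sum s n) (A n)"
  assumes lim: "s \<longlonglongrightarrow> S"
  shows "(f has_sum S) U"
proof -
  have incA: "incseq A" by (rule incseq_SucI) (use mono in auto)
  have AU: "A n \<subseteq> U" for n using U by auto
  have incs: "incseq s"
  proof (rule incseq_SucI)
    fix n show "s n \<le> s (Suc n)"
      by (rule has_sum_mono2[OF hs hs mono]) (use nonneg AU in blast)
  qed
  have sS: "s n \<le> S" for n using incseq_le[OF incs lim] .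
  have fin: "sum f F \<le> S" if F1: "finite F" and F2: "F \<subseteq> U" for F
  proof -
    obtain n where n: "F \<subseteq> A n" using finite_in_chain[OF incA F1] F2 U by auto
    have "sum f F \<le> s n"
      by (rule finite_sum_le_has_sum[OF hs F1 n]) (use nonneg AU in blast)
    then show ?thesis using sS[of n] by linarith
  qed
  have summ: "f summable_on U"
    by (rule nonneg_bdd_above_summable_on) (use nonneg fin in \<open>auto intro!: bdd_aboveI2\<close>)
  have T1: "infsum f U \<le> S" by (rule infsum_le_finite_sums[OF summ fin])
  have "s n \<le> infsum f U" for n
    by (rule has_sum_mono2[OF hs has_sum_infsum[OF summ] AU]) (use nonneg in blast)
  then have T2: "S \<le> infsum f U" by (intro LIMSEQ_le_const2[OF lim]) auto
  have "infsum f U = S" using T1 T2 by linarith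
  then show ?thesis using summ has_sum_infsum by metis
qed

lemma has_sum_prod_nonneg:
  fixes f :: "'a \<Rightarrow> real" and g :: "'b \<Rightarrow> real"
  assumes f0: "\<And>x. x \<in> A \<Longrightarrow> 0 \<le> f x" and g0: "\<And>y. y \<in> B \<Longrightarrow> 0 \<le> g y"
  assumes hf: "(f has_sum a) A" and hg: "(g has_sum b) B"
  shows "((\<lambda>(x,y). f x * g y) has_sum (a * b)) (A \<times> B)"
proof -
  let ?h = "\<lambda>(x,y). f x * g y"
  have inner: "(\<Sum>\<^sub>\<infinity>y\<in>B. norm (f x * g y)) = f x * b" if "x \<in> A" for x
  proof -
    have "(\<Sum>\<^sub>\<infinity>y\<in>B. norm (f x * g y)) = (\<Sum>\<^sub>\<infinity>y\<in>B. f x * g y)"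
      by (rule infsum_cong) (use f0 g0 that in auto)
    also have "\<dots> = f x * b" using hg by (simp add: infsum_cmult_right' infsumI)
    finally show ?thesis .
  qed
  have "(\<lambda>z. norm (?h z)) summable_on Sigma A (\<lambda>_. B)"
  proof (rule Infinite_Sum.abs_summable_on_Sigma_iff[THEN iffD2], intro conjI ballI)
    fix x assume x: "x \<in> A"
    have "(\<lambda>y. f x * g y) summable_on B" using hg by (intro summable_on_cmult_right) (auto simp: summable_on_def)
    moreover have "(\<lambda>y. norm (f x * g y)) = (\<lambda>y. f x * g y)" if "\<forall>y. 0 \<le> g y"
      using that f0 x by auto
    show "(\<lambda>y. norm (?h (x, y))) summable_on B"
    proof -
      have "(\<lambda>y. f x * g y) summable_on B" using hg by (intro summable_on_cmult_right) (auto simp: summable_on_def)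
      then show ?thesis
        by (rule summable_on_cong[THEN iffD1, rotated]) (use f0 g0 x in auto)
    qed
  next
    have "(\<lambda>x. f x * b) summable_on A" using hf by (intro summable_on_cmult_left) (auto simp: summable_on_def)
    then have "(\<lambda>x. \<Sum>\<^sub>\<infinity>y\<in>B. norm (?h (x, y))) summable_on A"
      by (rule summable_on_cong[THEN iffD1, rotated]) (use inner in auto)
    then show "(\<lambda>x. norm (\<Sum>\<^sub>\<infinity>y\<in>B. norm (?h (x, y)))) summable_on A"
      by (rule summable_on_cong[THEN iffD1, rotated]) (simp add: infsum_nonneg)
  qed
  then have summ: "?h summable_on A \<times> B" using abs_summable_summable by blast
  have "infsum ?h (A \<times> B) = (\<Sum>\<^sub>\<infinity>x\<in>A. \<Sum>\<^sub>\<infinity>y\<in>B. ?h (x,y))"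
    using infsum_Sigma_banach[OF summ] by simp
  also have "\<dots> = (\<Sum>\<^sub>\<infinity>x\<in>A. f x * b)"
    by (rule infsum_cong) (use hg in \<open>simp add: infsum_cmult_right' infsumI\<close>)
  also have "\<dots> = a * b" using hf by (simp add: infsum_cmult_left' infsumI)
  finally show ?thesis using summ has_sum_infsum by metis
qed

lemma geom_has_sum:
  fixes r :: real
  assumes "0 \<le> r" "r < 1"
  shows "((\<lambda>a::nat. r ^ a) has_sum (r / (1 - r))) {1..}"
proof -
  have "(\<lambda>n. r * r ^ n) sums (r * (1 / (1 - r)))"
    by (rule sums_mult) (rule geometric_sums, use assms in simp)
  then have "((\<lambda>n. r ^ Suc n) has_sum (r / (1 - r))) UNIV"
    by (intro sums_nonneg_imp_has_sum) (use assms in auto)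
  then have "((\<lambda>a. r ^ a) has_sum (r / (1 - r))) (Suc ` UNIV)"
    by (subst has_sum_reindex) (auto simp: o_def)
  moreover have "Suc ` UNIV = {1..}" by (auto dest: Suc_le_D)
  ultimately show ?thesis by simp
qed

lemma conv_prod_geom:
  fixes f :: "nat \<Rightarrow> real"
  assumes "0 \<le> p" "p < 1" "\<And>n. \<bar>f n - 1\<bar> \<le> C * p ^ n"
  shows "convergent_prod f"
proof -
  have "summable (\<lambda>n. C * p ^ n)" using assms by (intro summable_mult summable_geometric) simp
  then have "summable (\<lambda>n. norm (f n - 1))"
    by (rule summable_comparison_test[rotated]) (use assms in auto)
  then show ?thesis by (intro abs_convergent_prod_imp_convergent_prod summable_imp_abs_convergent_prod)
qed

lemma conv_prod_LIMSEQ_lessThan: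
  "convergent_prod (f :: nat \<Rightarrow> real) \<Longrightarrow> (\<lambda>n. \<Prod>i<n. f i) \<longlonglongrightarrow> prodinf f"
  by (subst LIMSEQ_lessThan_iff_atMost[of "prod f"]) (erule convergent_prod_LIMSEQ)

definition Ln :: "nat \<Rightarrow> (nat \<times> nat) list set" where
  "Ln N = {L \<in> Lpos. sbb L \<le> N}"

definition hL :: "real \<Rightarrow> real \<Rightarrow> (nat \<times> nat) list \<Rightarrow> real" where
  "hL t p L = t ^ length L * p ^ invL L"

lemma sbb_pos: "L \<in> Lpos \<Longrightarrow> L \<noteq> [] \<Longrightarrow> 0 < sbb L"
  by (cases L) auto

lemma Ln_0: "Ln 0 = {[]}"
  unfolding Ln_def using sbb_pos by fastforce

lemma Ln_Suc: "Ln (Suc N) = Ln N \<union> (\<lambda>(a,L). (a, Suc N - sbb L) # L) ` ({1..} \<times> Ln N)"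
proof (rule set_eqI)
  fix L
  show "L \<in> Ln (Suc N) \<longleftrightarrow> L \<in> Ln N \<union> (\<lambda>(a,L). (a, Suc N - sbb L) # L) ` ({1..} \<times> Ln N)"
  proof
    assume L: "L \<in> Ln (Suc N)"
    show "L \<in> Ln N \<union> (\<lambda>(a,L). (a, Suc N - sbb L) # L) ` ({1..} \<times> Ln N)"
    proof (cases "sbb L \<le> N")
      case True then show ?thesis using L by (auto simp: Ln_def)
    next
      case False
      then have "L \<noteq> []" by auto
      then obtain a b L' where L': "L = (a,b)#L'" by (metis list.exhaust surj_pair)
      have "sbb L = Suc N" using False L by (auto simp: Ln_def)
      then have "b = Suc N - sbb L'" "sbb L' \<le> N" using L L' by (auto simp: Ln_def)
      moreover have "a \<in> {1..}" "L' \<in> Lpos" using L L' by (auto simp: Ln_def)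
      ultimately show ?thesis using L' by (auto simp: Ln_def image_iff intro!: bexI[of _ "(a, L')"])
    qed
  next
    assume "L \<in> Ln N \<union> (\<lambda>(a,L). (a, Suc N - sbb L) # L) ` ({1..} \<times> Ln N)"
    then show "L \<in> Ln (Suc N)" by (auto simp: Ln_def)
  qed
qed

lemma Ln_disj: "Ln N \<inter> (\<lambda>(a,L). (a, Suc N - sbb L) # L) ` ({1..} \<times> Ln N) = {}"
  by (auto simp: Ln_def)

lemma Ln_inj: "inj_on (\<lambda>(a,L). (a, Suc N - sbb L) # L) ({1..} \<times> Ln N)"
  by (auto simp: inj_on_def)

lemma hL_nonneg: "0 \<le> t \<Longrightarrow> 0 \<le> p \<Longrightarrow> 0 \<le> hL t p L"
  by (simp add: hL_def)

lemma Q_N: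
  assumes t: "0 \<le> t" and p: "0 \<le> p" "p < 1"
  shows "(hL t p has_sum (\<Prod>s<N. 1 + t * p ^ Suc s / (1 - p ^ Suc s))) (Ln N)"
proof (induction N)
  case 0
  then show ?case by (auto simp: Ln_0 hL_def intro: has_sum_finiteI)
next
  case (Suc N)
  let ?\<phi> = "\<lambda>(a,L). (a, Suc N - sbb L) # L"
  let ?r = "p ^ Suc N"
  let ?Q = "\<Prod>s<N. 1 + t * p ^ Suc s / (1 - p ^ Suc s)"
  have r: "0 \<le> ?r" "?r < 1" using p by (simp, simp add: power_less_one_iff del: power_Suc)
  have g: "((\<lambda>a::nat. t * ?r ^ a) has_sum (t * (?r / (1 - ?r)))) {1..}"
    by (rule has_sum_cmult_right[OF geom_has_sum[OF r]])
  have "((\<lambda>(a,L). (t * ?r ^ a) * hL t p L) has_sum ((t * (?r / (1 - ?r))) * ?Q)) ({1..} \<times> Ln N)"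
    by (rule has_sum_prod_nonneg[OF _ _ g Suc.IH]) (use t p in \<open>auto simp: hL_def\<close>)
  moreover have eqh: "(hL t p \<circ> ?\<phi>) x = (\<lambda>(a,L). (t * ?r ^ a) * hL t p L) x" if "x \<in> {1..} \<times> Ln N" for x
  proof -
    obtain a L where x: "x = (a,L)" by fastforce
    have "sbb L \<le> N" using that x by (auto simp: Ln_def)
    then have e: "invL ((a, Suc N - sbb L) # L) = Suc N * a + invL L" by simp
    have "?\<phi> x = (a, Suc N - sbb L) # L" using x by simp
    then have "hL t p (?\<phi> x) = t ^ length ((a, Suc N - sbb L) # L) * p ^ (Suc N * a + invL L)"
      by (simp only: hL_def e)
    also have "\<dots> = (t * ?r ^ a) * hL t p L"
      by (simp only: power_add power_mult list.size hL_def) (simp add: mult_ac del: power_Suc)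
    finally show ?thesis using x by (simp only: o_def case_prod_conv)
  qed
  ultimately have "((hL t p \<circ> ?\<phi>) has_sum ((t * (?r / (1 - ?r))) * ?Q)) ({1..} \<times> Ln N)"
    using has_sum_cong[of "{1..} \<times> Ln N" "hL t p \<circ> ?\<phi>"] by blast
  then have "(hL t p has_sum ((t * (?r / (1 - ?r))) * ?Q)) (?\<phi> ` ({1..} \<times> Ln N))"
    by (subst has_sum_reindex[OF Ln_inj])
  from has_sum_Un_disjoint[OF Suc.IH this Ln_disj]
  have "(hL t p has_sum (?Q + (t * (?r / (1 - ?r))) * ?Q)) (Ln (Suc N))" by (simp add: Ln_Suc)
  moreover have "?Q + (t * (?r / (1 - ?r))) * ?Q = (\<Prod>s<Suc N. 1 + t * p ^ Suc s / (1 - p ^ Suc s))"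
    by (simp only: prod.lessThan_Suc) (simp add: ring_distribs mult_ac del: power_Suc)
  ultimately show ?case by simp
qed

lemma Q_has_sum:
  assumes t: "0 \<le> t" and p: "0 \<le> p" "p < 1"
  shows "(hL t p has_sum (\<Prod>s. 1 + t * p ^ Suc s / (1 - p ^ Suc s))) Lpos"
proof (rule has_sum_mono_union[OF _ _ _ Q_N[OF t p]])
  show "x \<in> Lpos \<Longrightarrow> 0 \<le> hL t p x" for x using hL_nonneg t p by blast
  show "Ln n \<subseteq> Ln (Suc n)" for n by (auto simp: Ln_def)
  show "Lpos = (\<Union>n. Ln n)" by (auto simp: Ln_def)
  show "(\<lambda>n. \<Prod>s<n. 1 + t * p ^ Suc s / (1 - p ^ Suc s)) \<longlonglongrightarrow> (\<Prod>s. 1 + t * p ^ Suc s / (1 - p ^ Suc s))"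
  proof (rule conv_prod_LIMSEQ_lessThan, rule conv_prod_geom[OF p, where C="t / (1 - p)"])
    fix n
    have pn: "p ^ Suc n \<le> p" using p by (simp add: power_Suc_le_self del: power_Suc)
    have pn1: "p ^ Suc n < 1" using p by (simp add: power_less_one_iff del: power_Suc)
    have "t * p ^ Suc n / (1 - p ^ Suc n) \<le> t * p ^ Suc n / (1 - p)"
      using t p pn pn1 by (intro divide_left_mono mult_nonneg_nonneg) auto
    also have "\<dots> = (t / (1 - p) * p ^ n) * p" by (simp add: field_simps)
    also have "\<dots> \<le> t / (1 - p) * p ^ n" using t p by (intro mult_right_le_one_le) auto
    finally show "\<bar>1 + t * p ^ Suc n / (1 - p ^ Suc n) - 1\<bar> \<le> t / (1 - p) * p ^ n"
      using t p pn1 by simp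
  qed
qed

definition ground :: "int \<Rightarrow> int" where "ground x = (if x \<le> 0 then -1 else 1)"
definition flipE :: "int set \<Rightarrow> config" where
  "flipE E x = (if x \<in> E then - ground x else ground x)"
definition ee :: "real \<Rightarrow> int \<Rightarrow> real" where
  "ee c x = (if 1 \<le> x then real_of_int x - c else c - real_of_int x)"

lemma finite_int_bound:
  fixes E :: "int set"
  assumes "finite E"
  shows "\<exists>N. 0 \<le> N \<and> E \<subseteq> {-N+1..N-1}"
proof -
  let ?N = "1 + (\<Sum>x\<in>E. \<bar>x\<bar>)"
  have "\<bar>x\<bar> \<le> (\<Sum>x\<in>E. \<bar>x\<bar>)" if "x \<in> E" for x
    using member_le_sum[of x E abs] assms that by auto
  then have "E \<subseteq> {-?N+1..?N-1}" by force
  moreover have "0 \<le> ?N" by (simp add: sum_nonneg add_nonneg_nonneg)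
  ultimately show ?thesis by blast
qed

lemma flipE_spin: "flipE E \<in> spin_configs"
  by (auto simp: spin_configs_def flipE_def ground_def)

lemma flipE_bounds:
  assumes "E \<subseteq> {-N+1..N-1}" "0 \<le> N"
  shows "\<forall>x\<le>-N. flipE E x = -1" "\<forall>x>N. flipE E x = 1"
  using assms by (auto simp: flipE_def ground_def)

lemma flipE_blocking: "finite E \<Longrightarrow> flipE E \<in> blocking"
proof -
  assume "finite E"
  then obtain N where N: "0 \<le> N" "E \<subseteq> {-N+1..N-1}" using finite_int_bound by blast
  show ?thesis unfolding blocking_def
  proof (intro CollectI conjI flipE_spin exI allI)
    fix i :: nat
    show "flipE E (-N - int i) = -1" "flipE E (N + 1 + int i) = 1"
      using flipE_bounds[OF N(2) N(1)] by auto
  qed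
qed

lemma flipE_inj: "inj_on flipE {E. finite E}"
proof (rule inj_onI)
  fix E E' assume "flipE E = flipE E'"
  moreover have "\<And>E. {x. flipE E x \<noteq> ground x} = E" by (auto simp: flipE_def ground_def)
  ultimately show "E = E'" by metis
qed

lemma flipE_surj: "\<sigma> \<in> blocking \<Longrightarrow> \<sigma> \<in> flipE ` {E. finite E}"
proof -
  assume "\<sigma> \<in> blocking"
  then obtain a0 b0 where sp: "\<sigma> \<in> spin_configs" and ab: "\<forall>i::nat. \<sigma> (a0 - int i) = -1 \<and> \<sigma> (b0 + int i) = 1"
    by (auto simp: blocking_def)
  have A: "\<sigma> x = -1" if "x \<le> a0" for x using ab[rule_format, of "nat (a0 - x)"] that by simp
  have B: "\<sigma> x = 1" if "x \<ge> b0" for x using ab[rule_format, of "nat (x - b0)"] that by simp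
  let ?E = "{x. \<sigma> x \<noteq> ground x}"
  have "?E \<subseteq> {min a0 0..max b0 1}"
  proof
    fix x assume "x \<in> ?E"
    then show "x \<in> {min a0 0..max b0 1}" using A[of x] B[of x] by (cases "x \<le> a0"; cases "x \<ge> b0"; auto simp: ground_def split: if_splits)
  qed
  then have fin: "finite ?E" using finite_subset by blast
  have "\<sigma> = flipE ?E"
  proof
    fix x show "\<sigma> x = flipE ?E x"
      using sp by (auto simp: flipE_def ground_def spin_configs_def)
  qed
  then show ?thesis using fin by blast
qed

lemma flipE_image: "flipE ` {E. finite E} = blocking"
  using flipE_surj flipE_blocking by blast

lemma f_flipE:
  assumes "finite E"
  shows "f_c c (flipE E) = 2 * (\<Sum>x\<in>E. ee c x)"
proof -
  obtain N where N: "0 \<le> N" "E \<subseteq> {-N+1..N-1}" using finite_int_bound assms by blast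
  have "f_c c (flipE E) = 2 * (\<Sum>x\<in>{-N..N}. Fv c (flipE E) x)"
    using FL[OF flipE_spin flipE_bounds[OF N(2) N(1)]] .
  also have "(\<Sum>x\<in>{-N..N}. Fv c (flipE E) x) = (\<Sum>x\<in>{-N..N}. if x \<in> E then ee c x else 0)"
    by (rule sum.cong) (auto simp: Fv_def flipE_def ground_def ee_def)
  also have "\<dots> = (\<Sum>x\<in>E. ee c x)"
  proof -
    have "{-N..N} \<inter> E = E" using N by auto
    then show ?thesis by (simp add: sum.If_cases)
  qed
  finally show ?thesis .
qed

definition uu :: "real \<Rightarrow> real \<Rightarrow> int \<Rightarrow> real" where
  "uu c q x = q powr (2 * ee c x)"

lemma weight0_flipE:
  assumes q: "0 < q" and E: "finite E"
  shows "weight 0 q c (flipE E) = (\<Prod>x\<in>E. uu c q x)"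
proof -
  have "weight 0 q c (flipE E) = q powr (\<Sum>x\<in>E. 2 * ee c x)"
    by (simp add: weight_def f_flipE[OF E] sum_distrib_left)
  also have "\<dots> = (\<Prod>x\<in>E. uu c q x)" using q by (simp add: powr_sum uu_def)
  finally show ?thesis .
qed

lemma Pow_has_sum:
  fixes g :: "'a \<Rightarrow> real"
  assumes "finite K"
  shows "((\<lambda>E. \<Prod>x\<in>E. g x) has_sum (\<Prod>x\<in>K. 1 + g x)) (Pow K)"
proof (rule has_sum_finiteI)
  show "finite (Pow K)" using assms by simp
  have "(\<Prod>x\<in>K. g x + 1) = (\<Sum>X\<in>Pow K. (\<Prod>x\<in>X. g x) * (\<Prod>x\<in>K-X. 1))"
    by (rule prod_add[OF assms, of g "\<lambda>_. 1"])
  then show "(\<Prod>x\<in>K. 1 + (g x :: real)) = (\<Sum>E\<in>Pow K. \<Prod>x\<in>E. g x)" by (simp add: add.commute)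
qed

lemma prod_sym_interval:
  "(\<Prod>x\<in>{-int N+1..int N}. (g x :: real)) = (\<Prod>n<N. g (int n + 1) * g (- int n))"
proof (induction N)
  case 0 then show ?case by simp
next
  case (Suc N)
  have eq: "{-int (Suc N)+1..int (Suc N)} = insert (int N + 1) (insert (- int N) {-int N+1..int N})"
    by auto
  have "(\<Prod>x\<in>{-int (Suc N)+1..int (Suc N)}. g x) = g (int N + 1) * (g (- int N) * (\<Prod>x\<in>{-int N+1..int N}. g x))"
    unfolding eq by (subst prod.insert; simp)+
  then show ?case using Suc by (simp add: mult_ac)
qed

lemma uu_pos: "0 < q \<Longrightarrow> 0 \<le> uu c q x"
  by (simp add: uu_def)

lemma uu_vals:
  assumes q: "0 < q"
  shows "uu c q (int n + 1) = q powr (-2 * c) * (q^2) ^ Suc n"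
    and "uu c q (- int n) = q powr (2 * c) * (q^2) ^ n"
proof -
  have e1: "2 * ee c (int n + 1) = real (2 * Suc n) + (-2 * c)" by (simp add: ee_def algebra_simps)
  have "uu c q (int n + 1) = q powr (real (2 * Suc n)) * q powr (-2 * c)"
    by (simp only: uu_def e1 powr_add)
  also have "q powr (real (2 * Suc n)) = (q^2) ^ Suc n"
    using q by (simp only: powr_realpow power_mult)
  finally show "uu c q (int n + 1) = q powr (-2 * c) * (q^2) ^ Suc n" by (simp only: mult.commute)
  have e2: "2 * ee c (- int n) = real (2 * n) + 2 * c" by (simp add: ee_def algebra_simps)
  have "uu c q (- int n) = q powr (real (2 * n)) * q powr (2 * c)"
    by (simp only: uu_def e2 powr_add)
  also have "q powr (real (2 * n)) = (q^2) ^ n"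
    using q by (simp only: powr_realpow power_mult)
  finally show "uu c q (- int n) = q powr (2 * c) * (q^2) ^ n" by (simp only: mult.commute)
qed

lemma PAB_conv:
  assumes q: "0 < q" "q < 1"
  shows "convergent_prod (\<lambda>n. (1 + uu c q (int n + 1)) * (1 + uu c q (- int n)))"
proof -
  let ?Z = "q powr (-2 * c)" and ?Z' = "q powr (2 * c)" and ?p = "q^2"
  have p: "0 \<le> ?p" "?p < 1" using q by (auto simp: power_less_one_iff)
  have p3: "?p \<le> 1" using p by simp
  show ?thesis
  proof (rule conv_prod_geom[OF p(1,2), where C = "?Z + ?Z' + ?Z * ?Z'"])
    fix n
    have pn: "?p ^ Suc n \<le> ?p ^ n" "?p ^ (2*n+1) \<le> ?p ^ n"
      using p by (intro power_decreasing; simp)+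
    have pp: "?p ^ n * ?p ^ Suc n = ?p ^ Suc (n * 2)"
      by (metis power_add add_Suc_right mult_2 mult.commute)
    have "(1 + uu c q (int n + 1)) * (1 + uu c q (- int n)) - 1
       = ?Z * ?p ^ Suc n + ?Z' * ?p ^ n + ?Z * ?Z' * ?p ^ (2*n+1)"
      unfolding uu_vals[OF q(1)] using pp by (simp add: algebra_simps power_add power_mult_distrib mult_2 del: power_Suc)
    also have "\<dots> \<le> ?Z * ?p ^ n + ?Z' * ?p ^ n + ?Z * ?Z' * ?p ^ n"
      using pn by (intro add_mono mult_left_mono) auto
    finally have le: "(1 + uu c q (int n + 1)) * (1 + uu c q (- int n)) - 1 \<le> (?Z + ?Z' + ?Z * ?Z') * ?p ^ n"
      by (simp add: algebra_simps)
    have ge: "0 \<le> (1 + uu c q (int n + 1)) * (1 + uu c q (- int n)) - 1"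
      using uu_pos[OF q(1)] by (simp add: algebra_simps add_nonneg_nonneg)
    show "\<bar>(1 + uu c q (int n + 1)) * (1 + uu c q (- int n)) - 1\<bar> \<le> (?Z + ?Z' + ?Z * ?Z') * ?p ^ n"
      using le ge by simp
  qed
qed

lemma E_has_sum:
  assumes q: "0 < q" "q < 1"
  shows "(weight 0 q c has_sum (\<Prod>n. (1 + uu c q (int n + 1)) * (1 + uu c q (- int n)))) blocking"
proof -
  let ?A = "\<lambda>N::nat. Pow {-int N+1..int N}"
  have hs: "((\<lambda>E. \<Prod>x\<in>E. uu c q x) has_sum (\<Prod>n. (1 + uu c q (int n + 1)) * (1 + uu c q (- int n)))) {E. finite E}"
  proof (rule has_sum_mono_union[where A = ?A])
    show "0 \<le> (\<Prod>x\<in>E. uu c q x)" for E using uu_pos[OF q(1)] by (simp add: prod_nonneg)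
    show "?A n \<subseteq> ?A (Suc n)" for n by auto
    show "{E. finite E} = (\<Union>n. ?A n)"
    proof
      show "{E. finite E} \<subseteq> (\<Union>n. ?A n)"
      proof
        fix E :: "int set" assume "E \<in> {E. finite E}"
        then obtain N where N: "0 \<le> N" "E \<subseteq> {-N+1..N-1}" using finite_int_bound by blast
        then have "E \<in> ?A (nat N)" by auto
        then show "E \<in> (\<Union>n. ?A n)" by blast
      qed
      show "(\<Union>n. ?A n) \<subseteq> {E. finite E}" by (auto intro: finite_subset)
    qed
    show "((\<lambda>E. \<Prod>x\<in>E. uu c q x) has_sum (\<Prod>n<N. (1 + uu c q (int n + 1)) * (1 + uu c q (- int n)))) (?A N)" for N
      using Pow_has_sum[of "{-int N+1..int N}" "uu c q"] prod_sym_interval[of "\<lambda>x. 1 + uu c q x" N] by simp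
    show "(\<lambda>N. \<Prod>n<N. (1 + uu c q (int n + 1)) * (1 + uu c q (- int n))) \<longlonglongrightarrow> (\<Prod>n. (1 + uu c q (int n + 1)) * (1 + uu c q (- int n)))"
      by (rule conv_prod_LIMSEQ_lessThan[OF PAB_conv[OF q]])
  qed
  have "((weight 0 q c \<circ> flipE) has_sum (\<Prod>n. (1 + uu c q (int n + 1)) * (1 + uu c q (- int n)))) {E. finite E}"
    using hs by (rule has_sum_cong[THEN iffD1, rotated]) (simp add: weight0_flipE[OF q(1)])
  then show ?thesis
    using has_sum_reindex[OF flipE_inj] flipE_image by metis
qed

definition gz :: "real \<Rightarrow> real \<Rightarrow> int \<Rightarrow> real" where
  "gz q c n = q powr (2 * psi c n)"

lemma weight_cfg:
  assumes q: "0 < q" and L: "L \<in> Lpos"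
  shows "weight \<beta> q c (cfg d L) = exp (-\<beta>) * gz q c (d + int (sbb L)) * hL (exp (-2*\<beta>)) (q^2) L"
proof -
  have e: "exp (- \<beta> * (1 + 2 * real (length L))) = exp (-\<beta>) * exp (-2*\<beta>) ^ length L"
  proof -
    have "- \<beta> * (1 + 2 * real (length L)) = -\<beta> + real (length L) * (-2*\<beta>)" by (simp add: algebra_simps)
    then show ?thesis by (simp only: exp_add exp_of_nat_mult)
  qed
  have f: "q powr f_c c (cfg d L) = gz q c (d + int (sbb L)) * (q^2) ^ invL L"
  proof -
    have "f_c c (cfg d L) = 2 * psi c (d + int (sbb L)) + real (2 * invL L)"
      using f_cfg[OF L] by simp
    then have "q powr f_c c (cfg d L) = q powr (2 * psi c (d + int (sbb L))) * q powr real (2 * invL L)"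
      by (simp add: powr_add)
    also have "q powr real (2 * invL L) = (q^2) ^ invL L" using q by (simp only: powr_realpow power_mult)
    finally show ?thesis by (simp add: gz_def)
  qed
  show ?thesis unfolding weight_def Ham_cfg[OF L] e f by (simp add: hL_def mult_ac)
qed

definition rho :: "int \<times> (nat \<times> nat) list \<Rightarrow> int \<times> (nat \<times> nat) list" where
  "rho x = (fst x + int (sbb (snd x)), snd x)"

lemma rho_inj: "inj_on rho (UNIV \<times> Lpos)"
  by (auto simp: inj_on_def rho_def)

lemma rho_image: "rho ` (UNIV \<times> Lpos) = UNIV \<times> Lpos"
proof
  show "rho ` (UNIV \<times> Lpos) \<subseteq> UNIV \<times> Lpos" by (auto simp: rho_def)
  show "UNIV \<times> Lpos \<subseteq> rho ` (UNIV \<times> Lpos)"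
  proof
    fix x assume "x \<in> (UNIV :: int set) \<times> Lpos"
    then obtain n L where x: "x = (n, L)" "L \<in> Lpos" by auto
    then have "x = rho (n - int (sbb L), L)" by (simp add: rho_def)
    then show "x \<in> rho ` (UNIV \<times> Lpos)" using x by blast
  qed
qed

lemma main_reindex:
  assumes q: "0 < q"
  shows "(weight \<beta> q c has_sum X) blocking \<longleftrightarrow>
    ((\<lambda>(n,L). exp (-\<beta>) * gz q c n * hL (exp (-2*\<beta>)) (q^2) L) has_sum X) (UNIV \<times> Lpos)"
  (is "_ \<longleftrightarrow> (?G has_sum X) _")
proof -
  have "(weight \<beta> q c has_sum X) blocking \<longleftrightarrow> ((weight \<beta> q c \<circ> (\<lambda>(d,L). cfg d L)) has_sum X) (UNIV \<times> Lpos)"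
    using has_sum_reindex[OF cfg_inj_on] cfg_image by metis
  also have "\<dots> \<longleftrightarrow> ((?G \<circ> rho) has_sum X) (UNIV \<times> Lpos)"
    by (rule has_sum_cong) (auto simp: weight_cfg[OF q] rho_def)
  also have "\<dots> \<longleftrightarrow> (?G has_sum X) (UNIV \<times> Lpos)"
    using has_sum_reindex[OF rho_inj] rho_image by metis
  finally show ?thesis .
qed

lemma gz_nonneg: "0 \<le> gz q c n" by (simp add: gz_def)

lemma gz_has_sum:
  assumes q: "0 < q" "q < 1"
  shows "(gz q c has_sum infsum (gz q c) UNIV) UNIV"
proof -
  have "((\<lambda>(n,L). exp (-0) * gz q c n * hL (exp (-2*0)) (q^2) L) has_sum
          (\<Prod>n. (1 + uu c q (int n + 1)) * (1 + uu c q (- int n)))) (UNIV \<times> Lpos)"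
    using main_reindex[OF q(1), of 0 c] E_has_sum[OF q, of c] by simp
  then have "(\<lambda>(n,L). exp (-0) * gz q c n * hL (exp (-2*0)) (q^2) L) summable_on (UNIV \<times> {[]})"
    by (rule summable_on_subset_banach[OF has_sum_imp_summable]) auto
  then have "((\<lambda>(n,L). exp (-0) * gz q c n * hL (exp (-2*0)) (q^2) L) \<circ> (\<lambda>n. (n, []))) summable_on UNIV"
  proof -
    have im: "(\<lambda>n::int. (n, [] :: (nat \<times> nat) list)) ` UNIV = UNIV \<times> {[]}" by auto
    have inj: "inj_on (\<lambda>n::int. (n, [] :: (nat \<times> nat) list)) UNIV" by (simp add: inj_on_def)
    show ?thesis using summable_on_reindex[OF inj] im \<open>_ summable_on (UNIV \<times> {[]})\<close> by metis
  qed
  then have "gz q c summable_on UNIV" by (simp add: o_def hL_def)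
  then show ?thesis by simp
qed

theorem corollary1p2:
  fixes c \<beta> q :: real
  assumes "\<beta> \<ge> 0" and "0 < q" and "q < 1"
  shows "weight \<beta> q c summable_on blocking
    \<and> partition_fn \<beta> q c =
      exp (- \<beta>) * (\<Prod>n. let i = real (Suc n) in
          (1 + (exp (- 2 * \<beta>) - 1) * q powr (2 * i))
        * (1 + q powr (2 * (i - c)))
        * (1 + q powr (2 * (i - 1 + c))))"
proof -
  have b0: "\<beta> \<ge> 0" and q: "0 < q" "q < 1" using assms by auto
  define t where "t = exp (-2*\<beta>)"
  define p where "p = q^2"
  define J where "J = infsum (gz q c) UNIV"
  define Pi where "Pi = (\<lambda>t. \<Prod>s. 1 + t * p ^ Suc s / (1 - p ^ Suc s))"
  define PAB where "PAB = (\<Prod>n. (1 + uu c q (int n + 1)) * (1 + uu c q (- int n)))"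
  define a where "a = (\<lambda>n. 1 + (t - 1) * p ^ Suc n)"
  define iv where "iv = (\<lambda>n::nat. 1 / (1 - p ^ Suc n))"
  have t: "0 < t" "t \<le> 1" using b0 by (auto simp: t_def)
  have p: "0 \<le> p" "p < 1" using q by (auto simp: p_def power_less_one_iff)
  have pS: "p ^ Suc n < 1" "p ^ Suc n \<le> p ^ n" "0 \<le> p ^ Suc n" for n
  proof -
    show "p ^ Suc n < 1" using p by (simp add: power_less_one_iff del: power_Suc)
    show "p ^ Suc n \<le> p ^ n" using p by (intro power_decreasing) auto
    show "0 \<le> p ^ Suc n" using p by (intro zero_le_power) 
  qed
  have ne: "1 - p ^ Suc n \<noteq> 0" for n using pS(1)[of n] by (simp del: power_Suc)
  have general: "(weight b q c has_sum exp (-b) * (J * Pi (exp (-2*b)))) blocking" if "b \<ge> 0" for b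
  proof -
    have "((\<lambda>(n,L). gz q c n * hL (exp (-2*b)) p L) has_sum (J * Pi (exp (-2*b)))) (UNIV \<times> Lpos)"
      unfolding J_def Pi_def
      by (rule has_sum_prod_nonneg[OF _ _ gz_has_sum[OF q] Q_has_sum]) (use p in \<open>auto simp: gz_nonneg hL_nonneg\<close>)
    from has_sum_cmult_right[OF this, of "exp (-b)"]
    have "((\<lambda>(n,L). exp (-b) * gz q c n * hL (exp (-2*b)) (q^2) L) has_sum exp (-b) * (J * Pi (exp (-2*b)))) (UNIV \<times> Lpos)"
      by (rule has_sum_cong[THEN iffD1, rotated]) (auto simp: p_def mult_ac)
    then show ?thesis using main_reindex[OF q(1)] by blast
  qed
  have Ht: "(weight \<beta> q c has_sum exp (-\<beta>) * (J * Pi t)) blocking"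
    using general[OF b0] by (simp add: t_def)
  have "(weight 0 q c has_sum (J * Pi 1)) blocking" using general[of 0] by simp
  then have PAB: "PAB = J * Pi 1"
    using E_has_sum[OF q, of c] has_sum_unique unfolding PAB_def by blast
  have conv_a: "convergent_prod a"
  proof (rule conv_prod_geom[OF p, where C = 1])
    fix n
    have "\<bar>a n - 1\<bar> = (1 - t) * p ^ Suc n" using t pS[of n] by (simp add: a_def abs_mult del: power_Suc)
    also have "\<dots> \<le> 1 * p ^ n" using t pS[of n] by (intro mult_mono) auto
    finally show "\<bar>a n - 1\<bar> \<le> 1 * p ^ n" .
  qed
  have conv_i: "convergent_prod iv"
  proof (rule conv_prod_geom[OF p, where C = "1 / (1 - p)"])
    fix n
    have "\<bar>iv n - 1\<bar> = p ^ Suc n / (1 - p ^ Suc n)"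
      using pS[of n] by (simp add: iv_def field_simps del: power_Suc)
    also have "\<dots> \<le> p ^ Suc n / (1 - p)"
      using pS[of n] p by (intro divide_left_mono) (auto simp: power_Suc_le_self simp del: power_Suc)
    also have "\<dots> \<le> p ^ n / (1 - p)"
      using pS[of n] p by (intro divide_right_mono) (auto simp del: power_Suc)
    finally show "\<bar>iv n - 1\<bar> \<le> 1 / (1 - p) * p ^ n" by simp
  qed
  have Pit: "Pi t = prodinf a * prodinf iv"
  proof -
    have "prodinf a * prodinf iv = (\<Prod>n. a n * iv n)" by (rule prodinf_mult[OF conv_a conv_i])
    also have "\<dots> = Pi t" unfolding Pi_def
      by (rule prodinf_cong) (use ne in \<open>simp add: a_def iv_def field_simps del: power_Suc\<close>)
    finally show ?thesis by simp
  qed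
  have Pi1: "Pi 1 = prodinf iv" unfolding Pi_def
    by (rule prodinf_cong) (use ne in \<open>simp add: iv_def field_simps del: power_Suc\<close>)
  have final: "prodinf a * PAB = (\<Prod>n. let i = real (Suc n) in
          (1 + (exp (- 2 * \<beta>) - 1) * q powr (2 * i))
        * (1 + q powr (2 * (i - c)))
        * (1 + q powr (2 * (i - 1 + c))))"
  proof -
    have "prodinf a * PAB = (\<Prod>n. a n * ((1 + uu c q (int n + 1)) * (1 + uu c q (- int n))))"
      unfolding PAB_def by (rule prodinf_mult[OF conv_a PAB_conv[OF q]])
    also have "\<dots> = (\<Prod>n. let i = real (Suc n) in
          (1 + (exp (- 2 * \<beta>) - 1) * q powr (2 * i))
        * (1 + q powr (2 * (i - c)))
        * (1 + q powr (2 * (i - 1 + c))))"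
    proof (rule prodinf_cong)
      fix n
      have u1: "uu c q (int n + 1) = q powr (2 * (real (Suc n) - c))" by (simp add: uu_def ee_def algebra_simps)
      have u2: "uu c q (- int n) = q powr (2 * (real (Suc n) - 1 + c))" by (simp add: uu_def ee_def algebra_simps)
      have "q powr (2 * real (Suc n)) = q powr (real (2 * Suc n))" by simp
      also have "\<dots> = q ^ (2 * Suc n)" by (rule powr_realpow[OF q(1)])
      also have "\<dots> = p ^ Suc n" by (simp only: p_def power_mult)
      finally have qp: "q powr (2 * real (Suc n)) = p ^ Suc n" .
      show "a n * ((1 + uu c q (int n + 1)) * (1 + uu c q (- int n))) = (let i = real (Suc n) in
          (1 + (exp (- 2 * \<beta>) - 1) * q powr (2 * i))
        * (1 + q powr (2 * (i - c)))
        * (1 + q powr (2 * (i - 1 + c))))"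
        unfolding Let_def a_def t_def qp u1 u2 by (simp only: mult.assoc)
    qed
    finally show ?thesis .
  qed
  have "J * Pi t = J * (prodinf a * prodinf iv)" using Pit by simp
  also have "\<dots> = prodinf a * (J * Pi 1)" using Pi1 by simp
  also have "\<dots> = prodinf a * PAB" using PAB by simp
  finally have val: "J * Pi t = prodinf a * PAB" .
  have H: "(weight \<beta> q c has_sum exp (- \<beta>) * (\<Prod>n. let i = real (Suc n) in
          (1 + (exp (- 2 * \<beta>) - 1) * q powr (2 * i))
        * (1 + q powr (2 * (i - c)))
        * (1 + q powr (2 * (i - 1 + c))))) blocking"
    using Ht unfolding val final .
  show ?thesis
    using H has_sum_imp_summable infsumI unfolding partition_fn_def by blast
qed

end
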